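(* Let $\mathcal{H}$ be an $n$-dimensional (real or complex) Hilbert space, let $F=\{f_i\}_{i=1}^N$ be a Parseval frame for $\mathcal{H}$, and let $\{q_i\}_{i=1}^N$ be the weight number sequence associated with a probability sequence $\{p_i\}_{i=1}^N$. Then the following are equivalent: (i) the canonical dual of $F$ is a 1-erasure POD of $F$; (ii) the canonical dual of $F$ is a 1-erasure PSOD of $F$; (iii) the canonical dual of $F$ is a 1-erasure PASOD-frame of $F$.
   Context: A finite sequence $F=\{f_i\}_{i=1}^N$ in $\mathcal{H}$ is a Parseval frame if $\sum_{i=1}^N|\langle f,f_i\rangle|^2=\|f\|^2$ for all $f$; its frame operator $S_Ff=\sum_i\langle f,f_i\rangle f_i$ is then the identity and the canonical dual is $S_F^{-1}F=\{S_F^{-1}f_i\}_{i=1}^N$. A frame $G=\{g_i\}_{i=1}^N$ is a dual of $F$ if $f=\sum_i\langle f,f_i\rangle g_i=\sum_i\langle f,g_i\rangle f_i$ for all $f$. A probability sequence is $\{p_i\}_{i=1}^N$ with $0\le p_i\le1$, $\sum p_i=1$; weight numbers $q_i=\frac{\sum_{j} p_j}{\sum_{j} p_j-p_i}\cdot\frac{N-1}{n}$. For $\Lambda\subseteq\{1,\dots,N\}$ the error operator is $E_{\Lambda,(F,G)}f=\sum_{i\in\Lambda}q_i\langle f,f_i\rangle g_i$. Let $\mathcal{O}_P^{(1)}(F,G)=\max_{|\Lambda|=1}\|E_{\Lambda,(F,G)}\|$, $r_P^{(1)}(F,G)=\max_{|\Lambda|=1}\rho(E_{\Lambda,(F,G)})$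 ($\rho$ = spectral radius), $\mathcal{A}_P^{(1)}(F,G)=\max_{|\Lambda|=1}\frac{\|E_{\Lambda,(F,G)}\|+\rho(E_{\Lambda,(F,G)})}{2}$. A dual $G$ of $F$ is a 1-erasure POD (resp. PSOD, PASOD-frame) of $F$ if it minimizes $\mathcal{O}_P^{(1)}(F,\cdot)$ (resp. $r_P^{(1)}(F,\cdot)$, $\mathcal{A}_P^{(1)}(F,\cdot)$) over all duals of $F$. *)

theory Defs
  imports "HOL-Analysis.Analysis"
begin

text \<open>The n-dimensional Hilbert space over K (K = reals or complexes) is modelled as
  the set of vectors in complex^'n whose coordinates lie in K, n = CARD('n),
  with the standard inner product (linear in the first argument).\<close>

definition cinner :: "complex^'n \<Rightarrow> complex^'n \<Rightarrow> complex" where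
  "cinner x y = (\<Sum>i\<in>UNIV. x$i * cnj (y$i))"

definition Kvec :: "complex set \<Rightarrow> complex^'n \<Rightarrow> bool" where
  "Kvec K v \<longleftrightarrow> (\<forall>i. v$i \<in> K)"

definition is_parseval_frame :: "complex set \<Rightarrow> nat \<Rightarrow> (nat \<Rightarrow> complex^'n) \<Rightarrow> bool" where
  "is_parseval_frame K N F \<longleftrightarrow> (\<forall>i\<in>{1..N}. Kvec K (F i)) \<and>
     (\<forall>f. Kvec K f \<longrightarrow> (\<Sum>i=1..N. (cmod (cinner f (F i)))^2) = (norm f)^2)"

definition is_frame :: "complex set \<Rightarrow> nat \<Rightarrow> (nat \<Rightarrow> complex^'n) \<Rightarrow> bool" where
  "is_frame K N G \<longleftrightarrow> (\<forall>i\<in>{1..N}. Kvec K (G i)) \<and>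
     (\<exists>A B. 0 < A \<and> A \<le> B \<and> (\<forall>f. Kvec K f \<longrightarrow>
        A * (norm f)^2 \<le> (\<Sum>i=1..N. (cmod (cinner f (G i)))^2) \<and>
        (\<Sum>i=1..N. (cmod (cinner f (G i)))^2) \<le> B * (norm f)^2))"

definition is_dual :: "complex set \<Rightarrow> nat \<Rightarrow> (nat \<Rightarrow> complex^'n) \<Rightarrow> (nat \<Rightarrow> complex^'n) \<Rightarrow> bool" where
  "is_dual K N F G \<longleftrightarrow> is_frame K N G \<and>
     (\<forall>f. Kvec K f \<longrightarrow> f = (\<Sum>i=1..N. cinner f (F i) *s G i) \<and>
                        f = (\<Sum>i=1..N. cinner f (G i) *s F i))"

definition frame_op :: "nat \<Rightarrow> (nat \<Rightarrow> complex^'n) \<Rightarrow> complex^'n \<Rightarrow> complex^'n" where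
  "frame_op N F f = (\<Sum>i=1..N. cinner f (F i) *s F i)"

definition canonical_dual :: "complex set \<Rightarrow> nat \<Rightarrow> (nat \<Rightarrow> complex^'n) \<Rightarrow> nat \<Rightarrow> complex^'n" where
  "canonical_dual K N F i = inv_into {f. Kvec K f} (frame_op N F) (F i)"

definition prob_seq :: "nat \<Rightarrow> (nat \<Rightarrow> real) \<Rightarrow> bool" where
  "prob_seq N p \<longleftrightarrow> (\<forall>i\<in>{1..N}. 0 \<le> p i \<and> p i \<le> 1) \<and> (\<Sum>i=1..N. p i) = 1"

definition weight_num :: "nat \<Rightarrow> nat \<Rightarrow> (nat \<Rightarrow> real) \<Rightarrow> nat \<Rightarrow> real" where
  "weight_num N n p i = (\<Sum>j=1..N. p j) / ((\<Sum>j=1..N. p j) - p i) * ((real N - 1) / real n)"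

definition err_op :: "(nat \<Rightarrow> real) \<Rightarrow> (nat \<Rightarrow> complex^'n) \<Rightarrow> (nat \<Rightarrow> complex^'n)
    \<Rightarrow> nat set \<Rightarrow> complex^'n \<Rightarrow> complex^'n" where
  "err_op q F G \<Lambda> f = (\<Sum>i\<in>\<Lambda>. (complex_of_real (q i) * cinner f (F i)) *s G i)"

definition op_norm :: "complex set \<Rightarrow> (complex^'n \<Rightarrow> complex^'n) \<Rightarrow> real" where
  "op_norm K T = Sup {norm (T v) | v. Kvec K v \<and> norm v \<le> 1}"

text \<open>Spectral radius: largest modulus of a (complex) eigenvalue; for K = reals this is
  the spectral radius of the complexification, which is given by the same formula.\<close>
definition spec_rad :: "(complex^'n \<Rightarrow> complex^'n) \<Rightarrow> real" where
  "spec_rad T = Sup {cmod l | l. \<exists>v. v \<noteq> 0 \<and> T v = l *s v}"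

definition O1 :: "complex set \<Rightarrow> nat \<Rightarrow> (nat \<Rightarrow> real) \<Rightarrow> (nat \<Rightarrow> complex^'n) \<Rightarrow> (nat \<Rightarrow> complex^'n) \<Rightarrow> real" where
  "O1 K N q F G = Max {op_norm K (err_op q F G \<Lambda>) | \<Lambda>. \<Lambda> \<subseteq> {1..N} \<and> card \<Lambda> = 1}"

definition r1 :: "nat \<Rightarrow> (nat \<Rightarrow> real) \<Rightarrow> (nat \<Rightarrow> complex^'n) \<Rightarrow> (nat \<Rightarrow> complex^'n) \<Rightarrow> real" where
  "r1 N q F G = Max {spec_rad (err_op q F G \<Lambda>) | \<Lambda>. \<Lambda> \<subseteq> {1..N} \<and> card \<Lambda> = 1}"

definition A1 :: "complex set \<Rightarrow> nat \<Rightarrow> (nat \<Rightarrow> real) \<Rightarrow> (nat \<Rightarrow> complex^'n) \<Rightarrow> (nat \<Rightarrow> complex^'n) \<Rightarrow> real" where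
  "A1 K N q F G = Max {(op_norm K (err_op q F G \<Lambda>) + spec_rad (err_op q F G \<Lambda>)) / 2
                       | \<Lambda>. \<Lambda> \<subseteq> {1..N} \<and> card \<Lambda> = 1}"

definition is_POD where
  "is_POD K N q F G \<longleftrightarrow> is_dual K N F G \<and> (\<forall>G'. is_dual K N F G' \<longrightarrow> O1 K N q F G \<le> O1 K N q F G')"

definition is_PSOD where
  "is_PSOD K N q F G \<longleftrightarrow> is_dual K N F G \<and> (\<forall>G'. is_dual K N F G' \<longrightarrow> r1 N q F G \<le> r1 N q F G')"

definition is_PASOD where
  "is_PASOD K N q F G \<longleftrightarrow> is_dual K N F G \<and> (\<forall>G'. is_dual K N F G' \<longrightarrow> A1 K N q F G \<le> A1 K N q F G')"

end

theory Submission
  imports Defs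
begin


lemma cinner_add_left: "cinner (x + y) z = cinner x z + cinner y z"
  by (simp add: cinner_def algebra_simps sum.distrib)
lemma cinner_diff_left: "cinner (x - y) z = cinner x z - cinner y z"
  by (simp add: cinner_def algebra_simps sum_subtractf)
lemma cinner_add_right: "cinner z (x + y) = cinner z x + cinner z y"
  by (simp add: cinner_def algebra_simps sum.distrib)
lemma cinner_scale_left: "cinner (c *s x) y = c * cinner x y"
  by (simp add: cinner_def sum_distrib_left algebra_simps)
lemma cinner_scale_right: "cinner x (c *s y) = cnj c * cinner x y"
  by (simp add: cinner_def sum_distrib_left algebra_simps)
lemma cinner_zero_left[simp]: "cinner 0 y = 0"
  by (simp add: cinner_def)
lemma cinner_sum_left: "cinner (\<Sum>i\<in>A. f i) y = (\<Sum>i\<in>A. cinner (f i) y)"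
  by (induct A rule: infinite_finite_induct) (auto simp: cinner_add_left)
lemma cinner_commute: "cinner y x = cnj (cinner x y)"
  by (simp add: cinner_def mult.commute)
lemma Re_cinner: "Re (cinner x y) = inner x y"
  by (simp add: cinner_def inner_vec_def inner_complex_def Re_sum)
lemma cinner_self: "cinner x x = complex_of_real ((norm x)^2)"
proof -
  have "cinner x x = (\<Sum>i\<in>UNIV. complex_of_real ((cmod (x$i))^2))"
    unfolding cinner_def by (simp add: complex_norm_square[symmetric])
  also have "\<dots> = complex_of_real (\<Sum>i\<in>UNIV. (cmod (x$i))^2)" by simp
  also have "(\<Sum>i\<in>UNIV. (cmod (x$i))^2) = (norm x)^2"
    unfolding norm_vec_def L2_set_def by (simp add: sum_nonneg)
  finally show ?thesis .
qed
lemma norm_smult: "norm (c *s (x::complex^'n)) = cmod c * norm x"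
  unfolding norm_vec_def by (simp add: L2_set_right_distrib norm_mult)
lemma scaleR_smult: "t *\<^sub>R (x::complex^'n) = complex_of_real t *s x"
  by (simp add: vec_eq_iff) (simp add: scaleR_conv_of_real)
lemma cinner_CS: "cmod (cinner x y) \<le> norm x * norm y"
proof (cases "cinner x y = 0")
  case True then show ?thesis by simp
next
  case False
  define z where "z = cinner x y"
  define u where "u = z / complex_of_real (cmod z)"
  have u1: "cmod u = 1" using False by (simp add: u_def z_def norm_divide)
  have "cinner x (u *s y) = cnj u * z" by (simp add: cinner_scale_right z_def)
  also have "cnj u * z = complex_of_real (cmod z)"
  proof -
    have zz: "cnj z * z = complex_of_real (cmod z)^2" using complex_norm_square[of z] by (simp add: mult.commute)
    have "z \<noteq> 0" using False by (simp add: z_def)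
    then show ?thesis by (simp add: u_def zz power2_eq_square)
  qed
  finally have "cmod z = inner x (u *s y)" by (metis Re_cinner Re_complex_of_real)
  also have "\<dots> \<le> norm x * norm (u *s y)" by (rule norm_cauchy_schwarz)
  also have "norm (u *s y) = norm y" by (simp add: norm_smult u1)
  finally show ?thesis by (simp add: z_def)
qed


locale Kfield = fixes K :: "complex set" assumes hK: "K = \<real> \<or> K = UNIV"
begin
lemma K_add: "a \<in> K \<Longrightarrow> b \<in> K \<Longrightarrow> a + b \<in> K" using hK by auto
lemma K_mult: "a \<in> K \<Longrightarrow> b \<in> K \<Longrightarrow> a * b \<in> K" using hK by auto
lemma K_cnj: "a \<in> K \<Longrightarrow> cnj a \<in> K" using hK by (auto simp: Reals_cnj_iff)
lemma K_real: "complex_of_real t \<in> K" using hK by auto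
lemma K_sum: "(\<And>i. i \<in> A \<Longrightarrow> f i \<in> K) \<Longrightarrow> sum f A \<in> K"
  using hK by (auto intro: sum_in_Reals)
lemma Kvec_add: "Kvec K x \<Longrightarrow> Kvec K y \<Longrightarrow> Kvec K (x + y)"
  by (simp add: Kvec_def K_add)
lemma Kvec_diff: "Kvec K x \<Longrightarrow> Kvec K y \<Longrightarrow> Kvec K (x - y)"
  using hK by (auto simp: Kvec_def)
lemma Kvec_smult: "c \<in> K \<Longrightarrow> Kvec K x \<Longrightarrow> Kvec K (c *s x)"
  by (simp add: Kvec_def K_mult)
lemma Kvec_scaleR: "Kvec K x \<Longrightarrow> Kvec K (t *\<^sub>R x)"
  by (simp add: scaleR_smult Kvec_smult K_real)
lemma Kvec_zero: "Kvec K 0"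
  using hK by (auto simp: Kvec_def)
lemma Kvec_sum: "(\<And>i. i \<in> A \<Longrightarrow> Kvec K (f i)) \<Longrightarrow> Kvec K (sum f A)"
  by (induct A rule: infinite_finite_induct) (auto simp: Kvec_zero Kvec_add)
lemma cinner_K: "Kvec K x \<Longrightarrow> Kvec K y \<Longrightarrow> cinner x y \<in> K"
  unfolding cinner_def by (rule K_sum) (simp add: Kvec_def K_mult K_cnj)
end

lemma cmod_add_sq: "(cmod (a + b))^2 = (cmod a)^2 + (cmod b)^2 + 2 * Re (a * cnj b)"
  unfolding cmod_power2 by (simp add: power2_eq_square algebra_simps)

lemma norm_add_sq: "(norm (x + y))^2 = (norm x)^2 + (norm y)^2 + 2 * inner x y"
  by (simp add: power2_norm_eq_inner inner_add inner_commute)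

lemma frame_op_id:
  assumes hK: "K = \<real> \<or> K = UNIV" and P: "is_parseval_frame K N F" and f: "Kvec K f"
  shows "frame_op N F f = f"
proof -
  interpret Kfield K using hK by unfold_locales
  have FK: "\<And>i. i \<in> {1..N} \<Longrightarrow> Kvec K (F i)" using P by (simp add: is_parseval_frame_def)
  have par: "\<And>g. Kvec K g \<Longrightarrow> (\<Sum>i=1..N. (cmod (cinner g (F i)))^2) = (norm g)^2"
    using P by (simp add: is_parseval_frame_def)
  have key: "inner (frame_op N F f) g = inner f g" if g: "Kvec K g" for g
  proof -
    have "inner (frame_op N F f) g = Re (\<Sum>i=1..N. cinner f (F i) * cinner (F i) g)"
      by (simp add: Re_cinner[symmetric] frame_op_def cinner_sum_left cinner_scale_left)
    also have "\<dots> = (\<Sum>i=1..N. Re (cinner f (F i) * cnj (cinner g (F i))))"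
      by (simp add: Re_sum cinner_commute[of g])
    also have "\<dots> = inner f g"
    proof -
      have "(norm (f + g))^2 = (\<Sum>i=1..N. (cmod (cinner (f+g) (F i)))^2)"
        using par[of "f+g"] Kvec_add[OF f g] by simp
      also have "\<dots> = (\<Sum>i=1..N. (cmod (cinner f (F i)))^2) + (\<Sum>i=1..N. (cmod (cinner g (F i)))^2)
          + 2 * (\<Sum>i=1..N. Re (cinner f (F i) * cnj (cinner g (F i))))"
        by (simp add: cinner_add_left cmod_add_sq sum.distrib sum_distrib_left)
      finally show ?thesis using par[OF f] par[OF g] norm_add_sq[of f g] by simp
    qed
    finally show ?thesis .
  qed
  have SK: "Kvec K (frame_op N F f)"
    unfolding frame_op_def by (rule Kvec_sum) (simp add: Kvec_smult cinner_K f FK)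
  define d where "d = frame_op N F f - f"
  have "Kvec K d" unfolding d_def by (rule Kvec_diff[OF SK f])
  then have "inner d d = 0" using key[of d] by (simp add: d_def inner_diff_left)
  then show ?thesis by (simp add: d_def)
qed

lemma canonical_eq:
  assumes hK: "K = \<real> \<or> K = UNIV" and P: "is_parseval_frame K N F" and i: "i \<in> {1..N}"
  shows "canonical_dual K N F i = F i"
proof -
  have FK: "Kvec K (F i)" using P i by (simp add: is_parseval_frame_def)
  have inj: "inj_on (frame_op N F) {f. Kvec K f}"
    by (rule inj_onI) (simp add: frame_op_id[OF hK P])
  have "canonical_dual K N F i = inv_into {f. Kvec K f} (frame_op N F) (frame_op N F (F i))"
    by (simp add: canonical_dual_def frame_op_id[OF hK P FK])
  also have "\<dots> = F i" using inv_into_f_f[OF inj] FK by simp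
  finally show ?thesis .
qed


lemma op_norm_rank1:
  assumes hK: "K = \<real> \<or> K = UNIV" and a: "Kvec K a"
  shows "op_norm K (\<lambda>v. (c * cinner v a) *s b) = cmod c * norm a * norm b"
proof -
  interpret Kfield K using hK by unfold_locales
  let ?S = "{norm ((c * cinner v a) *s b) | v. Kvec K v \<and> norm v \<le> 1}"
  let ?M = "cmod c * norm a * norm b"
  have up: "x \<le> ?M" if xS: "x \<in> ?S" for x
  proof -
    obtain v where v: "Kvec K v" "norm v \<le> 1" "x = norm ((c * cinner v a) *s b)" using xS by auto
    have "x = cmod c * cmod (cinner v a) * norm b" using v by (simp add: norm_smult norm_mult)
    also have "\<dots> \<le> cmod c * (norm v * norm a) * norm b"
      by (intro mult_right_mono mult_left_mono cinner_CS) auto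
    also have "\<dots> \<le> cmod c * (1 * norm a) * norm b"
      by (intro mult_right_mono mult_left_mono v) auto
    finally show ?thesis by simp
  qed
  have mem: "?M \<in> ?S"
  proof (cases "a = 0")
    case True
    then show ?thesis using Kvec_zero by (auto intro!: exI[of _ 0])
  next
    case False
    define v where "v = (1 / norm a) *\<^sub>R a"
    have vK: "Kvec K v" by (simp add: v_def Kvec_scaleR a)
    have nv: "norm v = 1" using False by (simp add: v_def)
    have "cinner v a = complex_of_real (norm a)"
      using False by (simp add: v_def scaleR_smult cinner_scale_left cinner_self power2_eq_square)
    then have "norm ((c * cinner v a) *s b) = ?M" by (simp add: norm_smult norm_mult)
    then show ?thesis using vK nv by (metis (mono_tags, lifting) order_refl mem_Collect_eq)
  qed
  show ?thesis unfolding op_norm_def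
    by (rule cSup_eq_maximum[OF mem]) (use up in blast)
qed

lemma spec_rad_rank1:
  fixes a b :: "complex^'n"
  shows "spec_rad (\<lambda>v. (c * cinner v a) *s b) = cmod c * cmod (cinner b a)"
proof -
  let ?S = "{cmod l | l. \<exists>v. v \<noteq> 0 \<and> (c * cinner v a) *s b = l *s v}"
  let ?M = "cmod c * cmod (cinner b a)"
  have up: "x \<le> ?M" if xS: "x \<in> ?S" for x
  proof -
    obtain l v where lv: "x = cmod l" "v \<noteq> 0" "(c * cinner v a) *s b = l *s v" using xS by auto
    show ?thesis
    proof (cases "l = 0")
      case True then show ?thesis using lv by simp
    next
      case False
      define s where "s = c * cinner v a"
      have vv: "v = (s / l) *s b" using lv(3) False
        by (simp add: s_def vec_eq_iff field_simps)
      have "s \<noteq> 0" using lv(2,3) False by (auto simp: s_def)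
      have "s = c * ((s / l) * cinner b a)" using vv
        by (metis s_def cinner_scale_left)
      then have "l = c * cinner b a" using \<open>s \<noteq> 0\<close> False by (simp add: field_simps)
      then show ?thesis using lv by (simp add: norm_mult)
    qed
  qed
  have mem: "?M \<in> ?S"
  proof (cases "b = 0")
    case True
    have "(1::complex^'n) \<noteq> 0" by (simp add: vec_eq_iff)
    moreover have "?M = cmod 0" using True by simp
    moreover have "(c * cinner 1 a) *s b = 0 *s (1::complex^'n)" using True by (simp add: vec_eq_iff)
    ultimately show ?thesis by blast
  next
    case False
    then have "(c * cinner b a) *s b = (c * cinner b a) *s b \<and> b \<noteq> 0" by simp
    moreover have "?M = cmod (c * cinner b a)" by (simp add: norm_mult)
    ultimately show ?thesis by blast
  qed
  show ?thesis unfolding spec_rad_def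
    by (rule cSup_eq_maximum[OF mem]) (use up in blast)
qed

lemma set_card1: "{\<phi> \<Lambda> | \<Lambda>. \<Lambda> \<subseteq> {1..N} \<and> card \<Lambda> = 1} = (\<lambda>i. \<phi> {i}) ` {1..(N::nat)}"
  by (auto simp: card_1_singleton_iff)

lemma err_single: "err_op q F G {i} = (\<lambda>f. (complex_of_real (q i) * cinner f (F i)) *s G i)"
  by (simp add: err_op_def fun_eq_iff)

lemma O1_eq:
  assumes hK: "K = \<real> \<or> K = UNIV" and FK: "\<forall>i\<in>{1..N}. Kvec K (F i)"
  shows "O1 K N q F G = Max ((\<lambda>i. \<bar>q i\<bar> * norm (F i) * norm (G i)) ` {1..N})"
  unfolding O1_def set_card1 err_single
proof (intro arg_cong[where f=Max] image_cong refl)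
  fix i assume "i \<in> {1..N}"
  then show "op_norm K (\<lambda>f. (complex_of_real (q i) * cinner f (F i)) *s G i) = \<bar>q i\<bar> * norm (F i) * norm (G i)"
    using op_norm_rank1[OF hK, of "F i" "complex_of_real (q i)" "G i"] FK by simp
qed

lemma r1_eq:
  shows "r1 N q F G = Max ((\<lambda>i. \<bar>q i\<bar> * cmod (cinner (G i) (F i))) ` {1..N})"
  unfolding r1_def set_card1 err_single
proof (intro arg_cong[where f=Max] image_cong refl)
  fix i assume "i \<in> {1..N}"
  then show "spec_rad (\<lambda>f. (complex_of_real (q i) * cinner f (F i)) *s G i) = \<bar>q i\<bar> * cmod (cinner (G i) (F i))"
    using spec_rad_rank1[of "complex_of_real (q i)" "F i" "G i"] by simp
qed

lemma A1_eq:
  assumes hK: "K = \<real> \<or> K = UNIV" and FK: "\<forall>i\<in>{1..N}. Kvec K (F i)"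
  shows "A1 K N q F G = Max ((\<lambda>i. (\<bar>q i\<bar> * norm (F i) * norm (G i) + \<bar>q i\<bar> * cmod (cinner (G i) (F i))) / 2) ` {1..N})"
  unfolding A1_def set_card1 err_single
proof (intro arg_cong[where f=Max] image_cong refl)
  fix i assume "i \<in> {1..N}"
  then show "(op_norm K (\<lambda>f. (complex_of_real (q i) * cinner f (F i)) *s G i) + spec_rad (\<lambda>f. (complex_of_real (q i) * cinner f (F i)) *s G i)) / 2
     = (\<bar>q i\<bar> * norm (F i) * norm (G i) + \<bar>q i\<bar> * cmod (cinner (G i) (F i))) / 2"
    using op_norm_rank1[OF hK, of "F i" "complex_of_real (q i)" "G i"] FK
      spec_rad_rank1[of "complex_of_real (q i)" "F i" "G i"] by simp
qed


lemma Re_mult_cnj_le: "Re (b * cnj a) \<le> ((cmod b)^2 + (cmod a)^2) / 2"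
proof -
  have "0 \<le> (Re b - Re a)^2 + (Im b - Im a)^2" by simp
  then show ?thesis unfolding cmod_power2 by (simp add: power2_eq_square algebra_simps)
qed

lemma dual_intro:
  assumes hK: "K = \<real> \<or> K = UNIV" and P: "is_parseval_frame K N F"
    and GK: "\<forall>i\<in>{1..N}. Kvec K (G i)"
    and R1: "\<forall>f. Kvec K f \<longrightarrow> f = (\<Sum>i=1..N. cinner f (F i) *s G i)"
    and R2: "\<forall>f. Kvec K f \<longrightarrow> f = (\<Sum>i=1..N. cinner f (G i) *s F i)"
  shows "is_dual K N F G"
proof -
  have par: "\<And>g. Kvec K g \<Longrightarrow> (\<Sum>i=1..N. (cmod (cinner g (F i)))^2) = (norm g)^2"
    using P by (simp add: is_parseval_frame_def)
  define B where "B = 1 + (\<Sum>i=1..N. (norm (G i))^2)"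
  have bounds: "1 * (norm f)^2 \<le> (\<Sum>i=1..N. (cmod (cinner f (G i)))^2) \<and>
        (\<Sum>i=1..N. (cmod (cinner f (G i)))^2) \<le> B * (norm f)^2" if f: "Kvec K f" for f
  proof
    have "(\<Sum>i=1..N. (cmod (cinner f (G i)))^2) \<le> (\<Sum>i=1..N. (norm f * norm (G i))^2)"
      by (intro sum_mono power_mono cinner_CS) auto
    also have "\<dots> = (norm f)^2 * (\<Sum>i=1..N. (norm (G i))^2)"
      by (simp add: sum_distrib_left power_mult_distrib)
    also have "\<dots> \<le> (norm f)^2 * B" unfolding B_def by (intro mult_left_mono) auto
    finally show "(\<Sum>i=1..N. (cmod (cinner f (G i)))^2) \<le> B * (norm f)^2" by (simp add: mult.commute)
  next
    have "(norm f)^2 = Re (cinner f f)" by (simp add: cinner_self)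
    also have "\<dots> = Re (cinner (\<Sum>i=1..N. cinner f (G i) *s F i) f)" using R2 f by metis
    also have "\<dots> = (\<Sum>i=1..N. Re (cinner f (G i) * cnj (cinner f (F i))))"
      by (simp add: cinner_sum_left cinner_scale_left Re_sum cinner_commute[of f "F _"])
    also have "\<dots> \<le> (\<Sum>i=1..N. ((cmod (cinner f (G i)))^2 + (cmod (cinner f (F i)))^2) / 2)"
      by (intro sum_mono Re_mult_cnj_le)
    also have "\<dots> = ((\<Sum>i=1..N. (cmod (cinner f (G i)))^2) + (norm f)^2) / 2"
      using par[OF f] by (simp add: sum.distrib sum_divide_distrib[symmetric])
    finally show "1 * (norm f)^2 \<le> (\<Sum>i=1..N. (cmod (cinner f (G i)))^2)" by simp
  qed
  have "0 < (1::real)" "1 \<le> B" unfolding B_def by (auto intro: sum_nonneg)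
  then have "is_frame K N G" unfolding is_frame_def using GK bounds by blast
  then show ?thesis unfolding is_dual_def using R1 R2 by blast
qed


lemma eps_exists:
  fixes a g :: "complex^'n" and w c :: real
  assumes w: "0 \<le> w" and le: "w * (norm a)^2 \<le> c" and lt: "w * cmod (cinner g a) < c"
  shows "\<exists>e>0. \<forall>t. 0 < t \<and> t < e \<longrightarrow> w * norm a * norm (a + t *\<^sub>R (g - a)) < c"
proof (cases "w * (norm a)^2 < c")
  case True
  define h where "h = g - a"
  define e where "e = (c - w * (norm a)^2) / (w * norm a * norm h + 1)"
  have pos: "0 < w * norm a * norm h + 1" using w by (simp add: add_nonneg_pos)
  have "e > 0" using True pos by (simp add: e_def)
  moreover have "w * norm a * norm (a + t *\<^sub>R h) < c" if t: "0 < t" "t < e" for t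
  proof -
    have "norm (a + t *\<^sub>R h) \<le> norm a + t * norm h"
      using norm_triangle_ineq[of a "t *\<^sub>R h"] t by simp
    then have "w * norm a * norm (a + t *\<^sub>R h) \<le> w * norm a * (norm a + t * norm h)"
      using w by (intro mult_left_mono) auto
    also have "\<dots> = w * (norm a)^2 + t * (w * norm a * norm h)" by (simp add: power2_eq_square algebra_simps)
    also have "\<dots> \<le> w * (norm a)^2 + t * (w * norm a * norm h + 1)" using t by simp
    also have "\<dots> < w * (norm a)^2 + e * (w * norm a * norm h + 1)"
      using t pos by simp
    also have "\<dots> = c" using pos by (simp add: e_def)
    finally show ?thesis .
  qed
  ultimately show ?thesis unfolding h_def by blast
next
  case False
  then have eq: "w * (norm a)^2 = c" using le by simp
  have "0 \<le> w * cmod (cinner g a)" using w by simp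
  then have cpos: "0 < c" using lt by simp
  then have wpos: "0 < w" and napos: "0 < norm a" using eq w
    by (auto simp: less_le) 
  have "w * cmod (cinner g a) < w * (norm a)^2" using lt eq by simp
  then have "cmod (cinner g a) < (norm a)^2" using wpos by simp
  moreover have "inner g a \<le> cmod (cinner g a)" using complex_Re_le_cmod Re_cinner by metis
  ultimately have dpos: "0 < (norm a)^2 - inner g a" by simp
  define h where "h = g - a"
  define d where "d = (norm a)^2 - inner g a"
  have iah: "inner a h = - d"
    by (simp add: h_def d_def inner_diff_right inner_commute power2_norm_eq_inner)
  define e where "e = 2 * d / ((norm h)^2 + 1)"
  have pos: "0 < (norm h)^2 + 1" by (simp add: add_nonneg_pos)
  have "e > 0" using dpos pos by (simp add: e_def d_def)
  moreover have "w * norm a * norm (a + t *\<^sub>R h) < c" if t: "0 < t" "t < e" for t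
  proof -
    have "t * ((norm h)^2 + 1) < 2 * d" using t pos by (simp add: e_def field_simps)
    then have "t * (norm h)^2 < 2 * d" using t by (simp add: algebra_simps)
    then have "t * (t * (norm h)^2) < t * (2 * d)" using t by simp
    then have "(norm (a + t *\<^sub>R h))^2 < (norm a)^2"
      using norm_add_sq[of a "t *\<^sub>R h"] iah by (simp add: power2_eq_square algebra_simps)
    then have "norm (a + t *\<^sub>R h) < norm a" using power2_less_imp_less napos by fastforce
    then have "w * norm a * norm (a + t *\<^sub>R h) < w * norm a * norm a"
      using wpos napos by simp
    then show ?thesis using eq by (simp add: power2_eq_square)
  qed
  ultimately show ?thesis unfolding h_def by blast
qed


lemma key:
  assumes hK: "K = \<real> \<or> K = UNIV" and P: "is_parseval_frame K N F" and G: "is_dual K N F G"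
    and N1: "1 \<le> N"
    and r: "Max ((\<lambda>i. \<bar>q i\<bar> * cmod (cinner (G i) (F i))) ` {1..N}) < Max ((\<lambda>i. \<bar>q i\<bar> * (norm (F i))^2) ` {1..N})"
  shows "\<exists>G'. is_dual K N F G' \<and> Max ((\<lambda>i. \<bar>q i\<bar> * norm (F i) * norm (G' i)) ` {1..N}) < Max ((\<lambda>i. \<bar>q i\<bar> * (norm (F i))^2) ` {1..N})"
proof -
  interpret Kfield K using hK by unfold_locales
  define A where "A = {1..N}"
  have fin: "finite A" and ne: "A \<noteq> {}" using N1 by (auto simp: A_def)
  define c where "c = Max ((\<lambda>i. \<bar>q i\<bar> * (norm (F i))^2) ` A)"
  have cle: "\<bar>q i\<bar> * (norm (F i))^2 \<le> c" if "i \<in> A" for i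
    using fin that by (auto simp: c_def)
  have slt: "\<bar>q i\<bar> * cmod (cinner (G i) (F i)) < c" if "i \<in> A" for i
  proof -
    have r': "Max ((\<lambda>i. \<bar>q i\<bar> * cmod (cinner (G i) (F i))) ` A) < c"
      using r unfolding A_def c_def .
    then show ?thesis using fin ne that by (simp add: Max_less_iff)
  qed
  have "\<forall>i\<in>A. \<exists>e>0. \<forall>t. 0 < t \<and> t < e \<longrightarrow> \<bar>q i\<bar> * norm (F i) * norm (F i + t *\<^sub>R (G i - F i)) < c"
    using eps_exists[OF abs_ge_zero cle slt] by blast
  then obtain e where e: "\<forall>i\<in>A. e i > 0 \<and> (\<forall>t. 0 < t \<and> t < e i \<longrightarrow> \<bar>q i\<bar> * norm (F i) * norm (F i + t *\<^sub>R (G i - F i)) < c)"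
    by metis
  define t where "t = Min (e ` A) / 2"
  have mpos: "0 < Min (e ` A)" using fin ne e by simp
  have tpos: "0 < t" using mpos by (simp add: t_def)
  have tlt: "t < e i" if "i \<in> A" for i
  proof -
    have "Min (e ` A) \<le> e i" using fin that by simp
    then show ?thesis using mpos by (simp add: t_def)
  qed
  define G' where "G' = (\<lambda>i. F i + t *\<^sub>R (G i - F i))"
  have FK: "\<forall>i\<in>{1..N}. Kvec K (F i)" using P by (simp add: is_parseval_frame_def)
  have GK: "\<forall>i\<in>{1..N}. Kvec K (G i)" using G by (simp add: is_dual_def is_frame_def)
  have RG1: "\<And>f. Kvec K f \<Longrightarrow> f = (\<Sum>i=1..N. cinner f (F i) *s G i)"
   and RG2: "\<And>f. Kvec K f \<Longrightarrow> f = (\<Sum>i=1..N. cinner f (G i) *s F i)"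
    using G by (auto simp: is_dual_def)
  have RF: "\<And>f. Kvec K f \<Longrightarrow> f = (\<Sum>i=1..N. cinner f (F i) *s F i)"
    using frame_op_id[OF hK P] by (simp add: frame_op_def)
  have dual: "is_dual K N F G'"
  proof (rule dual_intro[OF hK P])
    show "\<forall>i\<in>{1..N}. Kvec K (G' i)" using FK GK
      by (simp add: G'_def Kvec_add Kvec_diff Kvec_scaleR)
    show "\<forall>f. Kvec K f \<longrightarrow> f = (\<Sum>i=1..N. cinner f (F i) *s G' i)"
    proof (intro allI impI)
      fix f :: "complex^'a" assume f: "Kvec K f"
      have e1: "f $ k = (\<Sum>i=1..N. cinner f (F i) * G i $ k)" for k
        using arg_cong[OF RG1[OF f], of "\<lambda>v. v $ k"] by (simp add: sum_component)
      have e2: "f $ k = (\<Sum>i=1..N. cinner f (F i) * F i $ k)" for k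
        using arg_cong[OF RF[OF f], of "\<lambda>v. v $ k"] by (simp add: sum_component)
      show "f = (\<Sum>i=1..N. cinner f (F i) *s G' i)"
      proof (subst vec_eq_iff, intro allI)
        fix k
        have "(\<Sum>i=1..N. cinner f (F i) *s G' i) $ k =
          (\<Sum>i=1..N. cinner f (F i) * F i $ k) + of_real t * ((\<Sum>i=1..N. cinner f (F i) * G i $ k) - (\<Sum>i=1..N. cinner f (F i) * F i $ k))"
          by (simp add: G'_def sum_component scaleR_smult algebra_simps sum.distrib sum_subtractf sum_distrib_left)
        also have "\<dots> = f $ k" using e1[of k] e2[of k] by simp
        finally show "f $ k = (\<Sum>i=1..N. cinner f (F i) *s G' i) $ k" by simp
      qed
    qed
    show "\<forall>f. Kvec K f \<longrightarrow> f = (\<Sum>i=1..N. cinner f (G' i) *s F i)"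
    proof (intro allI impI)
      fix f :: "complex^'a" assume f: "Kvec K f"
      have e1: "f $ k = (\<Sum>i=1..N. cinner f (G i) * F i $ k)" for k
        using arg_cong[OF RG2[OF f], of "\<lambda>v. v $ k"] by (simp add: sum_component)
      have e2: "f $ k = (\<Sum>i=1..N. cinner f (F i) * F i $ k)" for k
        using arg_cong[OF RF[OF f], of "\<lambda>v. v $ k"] by (simp add: sum_component)
      have ci: "cinner f (G' i) = cinner f (F i) + of_real t * (cinner f (G i) - cinner f (F i))" for i
      proof -
        have dr: "\<And>x y. cinner f (x - y) = cinner f x - cinner f y"
          by (simp add: cinner_commute[of f] cinner_diff_left)
        show ?thesis by (simp add: G'_def scaleR_smult cinner_add_right cinner_scale_right dr algebra_simps)
      qed
      show "f = (\<Sum>i=1..N. cinner f (G' i) *s F i)"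
      proof (subst vec_eq_iff, intro allI)
        fix k
        have "(\<Sum>i=1..N. cinner f (G' i) *s F i) $ k =
          (\<Sum>i=1..N. cinner f (F i) * F i $ k) + of_real t * ((\<Sum>i=1..N. cinner f (G i) * F i $ k) - (\<Sum>i=1..N. cinner f (F i) * F i $ k))"
          by (simp add: ci sum_component algebra_simps sum.distrib sum_subtractf sum_distrib_left)
        also have "\<dots> = f $ k" using e1[of k] e2[of k] by simp
        finally show "f $ k = (\<Sum>i=1..N. cinner f (G' i) *s F i) $ k" by simp
      qed
    qed
  qed
  have "Max ((\<lambda>i. \<bar>q i\<bar> * norm (F i) * norm (G' i)) ` A) < c"
    using fin ne e tpos tlt by (simp add: Max_less_iff G'_def)
  then show ?thesis using dual by (auto simp: A_def c_def)
qed


lemma Max_mono_img: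
  assumes "finite A" "A \<noteq> {}" "\<And>i. i \<in> A \<Longrightarrow> f i \<le> (g i :: real)"
  shows "Max (f ` A) \<le> Max (g ` A)"
  using assms by (subst Max_le_iff) (auto intro: order_trans[OF _ Max_ge])

lemma main_gen:
  fixes K :: "complex set" and N :: nat and F :: "nat \<Rightarrow> complex^'n" and q :: "nat \<Rightarrow> real"
  assumes hK: "K = \<real> \<or> K = UNIV" and P: "is_parseval_frame K N F" and N1: "1 \<le> N"
  shows "(is_POD K N q F (canonical_dual K N F) \<longleftrightarrow> is_PSOD K N q F (canonical_dual K N F))
       \<and> (is_PSOD K N q F (canonical_dual K N F) \<longleftrightarrow> is_PASOD K N q F (canonical_dual K N F))"
proof -
  define C where "C = canonical_dual K N F"
  have fin: "finite {1..N}" and ne: "{1..N} \<noteq> {}" using N1 by auto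
  have FK: "\<forall>i\<in>{1..N}. Kvec K (F i)" using P by (simp add: is_parseval_frame_def)
  have Ceq: "\<And>i. i \<in> {1..N} \<Longrightarrow> C i = F i" using canonical_eq[OF hK P] by (simp add: C_def)
  define c where "c = Max ((\<lambda>i. \<bar>q i\<bar> * (norm (F i))^2) ` {1..N})"
  have OC: "O1 K N q F C = c" unfolding O1_eq[OF hK FK] c_def
    by (intro arg_cong[where f=Max] image_cong refl) (simp add: Ceq power2_eq_square)
  have rC: "r1 N q F C = c" unfolding r1_eq c_def
    by (intro arg_cong[where f=Max] image_cong refl) (simp add: Ceq cinner_self norm_power)
  have AC: "A1 K N q F C = c" unfolding A1_eq[OF hK FK] c_def
    by (intro arg_cong[where f=Max] image_cong refl) (simp add: Ceq cinner_self norm_power norm_mult power2_eq_square)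
  have RF: "\<And>f. Kvec K f \<Longrightarrow> f = (\<Sum>i=1..N. cinner f (F i) *s F i)"
    using frame_op_id[OF hK P] by (simp add: frame_op_def)
  have dualC: "is_dual K N F C"
  proof (rule dual_intro[OF hK P])
    show "\<forall>i\<in>{1..N}. Kvec K (C i)" using FK Ceq by simp
    show "\<forall>f. Kvec K f \<longrightarrow> f = (\<Sum>i=1..N. cinner f (F i) *s C i)"
      using RF Ceq by (metis (no_types, lifting) sum.cong)
    show "\<forall>f. Kvec K f \<longrightarrow> f = (\<Sum>i=1..N. cinner f (C i) *s F i)"
      using RF Ceq by (metis (no_types, lifting) sum.cong)
  qed
  have ineq: "r1 N q F G \<le> A1 K N q F G \<and> A1 K N q F G \<le> O1 K N q F G" for G
  proof -
    have pw: "\<bar>q i\<bar> * cmod (cinner (G i) (F i)) \<le> \<bar>q i\<bar> * norm (F i) * norm (G i)" for i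
      using cinner_CS[of "G i" "F i"] by (simp add: mult_left_mono mult.assoc mult.commute[of "norm (F i)"])
    show ?thesis unfolding r1_eq O1_eq[OF hK FK] A1_eq[OF hK FK]
    proof (intro conjI Max_mono_img[OF fin ne])
      fix i
      show "\<bar>q i\<bar> * cmod (cinner (G i) (F i)) \<le> (\<bar>q i\<bar> * norm (F i) * norm (G i) + \<bar>q i\<bar> * cmod (cinner (G i) (F i))) / 2"
        using pw[of i] by simp
      show "(\<bar>q i\<bar> * norm (F i) * norm (G i) + \<bar>q i\<bar> * cmod (cinner (G i) (F i))) / 2 \<le> \<bar>q i\<bar> * norm (F i) * norm (G i)"
        using pw[of i] by simp
    qed
  qed
  have keyC: "\<exists>G'. is_dual K N F G' \<and> O1 K N q F G' < c" if "is_dual K N F G" "r1 N q F G < c" for G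
    using key[OF hK P that(1) N1, of q] that(2) unfolding r1_eq c_def O1_eq[OF hK FK] by blast
  have PODPSOD: "is_POD K N q F C \<longleftrightarrow> is_PSOD K N q F C"
  proof
    assume H: "is_POD K N q F C"
    show "is_PSOD K N q F C" unfolding is_PSOD_def
    proof (intro conjI allI impI)
      fix G' assume G': "is_dual K N F G'"
      show "r1 N q F C \<le> r1 N q F G'"
      proof (rule ccontr)
        assume "\<not> ?thesis"
        then obtain G'' where "is_dual K N F G''" "O1 K N q F G'' < c" using keyC G' rC by force
        then show False using H OC unfolding is_POD_def by fastforce
      qed
    qed (rule dualC)
  next
    assume H: "is_PSOD K N q F C"
    show "is_POD K N q F C" unfolding is_POD_def
    proof (intro conjI allI impI)
      fix G' assume G': "is_dual K N F G'"
      show "O1 K N q F C \<le> O1 K N q F G'"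
        using H G' OC rC ineq[of G'] unfolding is_PSOD_def by fastforce
    qed (rule dualC)
  qed
  have PSODPASOD: "is_PSOD K N q F C \<longleftrightarrow> is_PASOD K N q F C"
  proof
    assume H: "is_PASOD K N q F C"
    show "is_PSOD K N q F C" unfolding is_PSOD_def
    proof (intro conjI allI impI)
      fix G' assume G': "is_dual K N F G'"
      show "r1 N q F C \<le> r1 N q F G'"
      proof (rule ccontr)
        assume "\<not> ?thesis"
        then obtain G'' where G'': "is_dual K N F G''" "O1 K N q F G'' < c" using keyC G' rC by force
        then have "A1 K N q F C \<le> A1 K N q F G''" using H unfolding is_PASOD_def by blast
        then show False using G'' AC ineq[of G''] by linarith
      qed
    qed (rule dualC)
  next
    assume H: "is_PSOD K N q F C"
    show "is_PASOD K N q F C" unfolding is_PASOD_def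
    proof (intro conjI allI impI)
      fix G' assume G': "is_dual K N F G'"
      show "A1 K N q F C \<le> A1 K N q F G'"
        using H G' AC rC ineq[of G'] unfolding is_PSOD_def by fastforce
    qed (rule dualC)
  qed
  show ?thesis using PODPSOD PSODPASOD by (simp add: C_def)
qed

theorem corollary3p1:
  fixes K :: "complex set" and N :: nat and F :: "nat \<Rightarrow> complex^'n" and p :: "nat \<Rightarrow> real"
  assumes "K = \<real> \<or> K = UNIV"
    and "is_parseval_frame K N F"
    and "prob_seq N p"
  shows "(is_POD K N (weight_num N CARD('n) p) F (canonical_dual K N F)
            \<longleftrightarrow> is_PSOD K N (weight_num N CARD('n) p) F (canonical_dual K N F))
       \<and> (is_PSOD K N (weight_num N CARD('n) p) F (canonical_dual K N F)
            \<longleftrightarrow> is_PASOD K N (weight_num N CARD('n) p) F (canonical_dual K N F))"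
proof -
  have "1 \<le> N"
  proof (rule ccontr)
    assume "\<not> 1 \<le> N"
    then have "N = 0" by simp
    then show False using assms(3) by (simp add: prob_seq_def)
  qed
  then show ?thesis using main_gen[OF assms(1,2)] by blast
qed

end
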